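(* Let $x_0\in\mathbb{R}$ and let $S:\mathbb{R}\to\mathbb{R}$ be a twice differentiable, decreasing function with $S''(\sigma)<0$ for all $\sigma$ (so $S$ is strictly concave downwards). Let $\{\Lambda_m\}_{m\in\mathbb{N}}$, $\{r_m\}_{m\in\mathbb{N}}$ and $I$ be as in the context. Let $(\mathcal{C}_{j,k})$ and $(\lambda_{j,k})$, indexed by $j\ge 0$, $k\in\mathbb{Z}$ with $|k-2^jx_0|<2^j$, be sequences of positive numbers such that: (i) for every $C\in\mathbb{R}$ and every choice of integers $k_j$ with $|k_j-2^jx_0|<2^j$, $$\limsup_{j\to+\infty}\left(\frac{\log_2(\mathcal{C}_{j,k_j})}{j}+C\,\frac{\log_2(\lambda_{j,k_j})}{j}\right)\le 0;$$ (ii) for every sequence of pairs $(j,k_j)\in I$ with $j\to+\infty$, $$\lim_{j\to+\infty}\frac{\log_2(\mathcal{C}_{j,k_j})}{j}=0\quad\text{and}\quad \lim_{j\to+\infty}\frac{\log_2(\lambda_{j,k_j})}{j}=0.$$ Let coefficients $c_{j,k}$ ($j\ge0$, $|k-2^jx_0|<2^j$) satisfy $$|c_{j,k}|\le \mathcal{C}_{j,k}\cdot\inf_{\sigma\in\mathbb{R}}\left\{2^{-jS(\sigma)}\left(\frac{1+|k-2^jx_0|}{\lambda_{j,k}}\right)^{S(\sigma)-\sigma}\right\},$$ with equality whenever $(j,k)\in I$. Let $\psi$ be a wavelet in the Schwartz class with all moments vanishing. Then the function (or distribution) defined near $x_0$ by $$f(x)=\sum_{j\ge0}\ \sum_{k\in\mathbb{Z},\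 |k-2^jx_0|<2^j} c_{j,k}\,\psi(2^jx-k)$$ has $S$ as its 2-microlocal frontier at $x_0$, i.e. $\sup\{s: f\in C^{s,\sigma-s}_{x_0}\}=S(\sigma)$ for every $\sigma\in\mathbb{R}$.
   Context: A wavelet is a function $\psi\in L^2(\mathbb{R})$ such that $\{2^{j/2}\psi(2^jx-k)\}_{j,k\in\mathbb{Z}}$ is an orthonormal basis of $L^2(\mathbb{R})$; the wavelet coefficients of $f$ are $c_{j,k}=2^{j/2}\langle f,\psi_{j,k}\rangle$ with $\psi_{j,k}(x)=2^{j/2}\psi(2^jx-k)$, so that $f=\sum c_{j,k}\psi(2^jx-k)$. For $s,s'\in\mathbb{R}$, the (local) 2-microlocal space $C^{s,s'}_{x_0}$ is defined as: $f\in C^{s,s'}_{x_0}$ iff there is $C>0$ with $|c_{j,k}|\le C\,2^{-js}(1+|k-2^jx_0|)^{-s'}$ for all $j\ge0$ and $k\in\mathbb{Z}$ with $|k/2^j-x_0|<1$ (the wavelet $\psi$ being Schwartz with all vanishing moments). The 2-microlocal frontier of $f$ at $x_0$ is the function $\sigma\mapsto\sup\{s: f\in C^{s,\sigma-s}_{x_0}\}$. Write $\mathbb{N}$ as a disjoint union $\mathbb{N}=\bigsqcup_{m\in\mathbb{N}}\Lambda_m$ of infinite sets $\Lambda_m$ (e.g. $\Lambda_m$ = natural numbers whose binary expansion has exactly $m$ ones). Let $\{r_m\}_{m\in\mathbb{N}}$ be a dense subset of $\mathrm{Im}\left(\frac{S'(\sigma)}{S'(\sigma)-1}\right)\subseteq[0,1]$.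 Define $$I=\{(j,k_j): j\in\Lambda_m \text{ for some } m,\ \text{and } [\,|k_j-2^jx_0|\,]=[2^{jr_m}]\},$$ where $[x]$ denotes the integer part of $x$. *)

theory Defs
  imports "HOL-Analysis.Analysis" "HOL-Library.Liminf_Limsup"
begin

definition loc_dom :: "real \<Rightarrow> (nat \<times> int) set" where
  "loc_dom x0 = {(j, k). \<bar>real_of_int k - 2 ^ j * x0\<bar> < 2 ^ j}"

text \<open>Local 2-microlocal space C^{s,s'}_{x0}, for a function given by its wavelet
  coefficients c j k (f = sum c j k psi(2^j x - k)), as defined in the context.\<close>
definition two_microlocal :: "real \<Rightarrow> (nat \<Rightarrow> int \<Rightarrow> real) \<Rightarrow> real \<Rightarrow> real \<Rightarrow> bool" where
  "two_microlocal x0 c s s' \<longleftrightarrow>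
     (\<exists>C>0. \<forall>j k. (j, k) \<in> loc_dom x0 \<longrightarrow>
        \<bar>c j k\<bar> \<le> C * 2 powr (- real j * s) * (1 + \<bar>real_of_int k - 2 ^ j * x0\<bar>) powr (- s'))"

definition two_microlocal_frontier :: "real \<Rightarrow> (nat \<Rightarrow> int \<Rightarrow> real) \<Rightarrow> real \<Rightarrow> ereal" where
  "two_microlocal_frontier x0 c \<sigma> = (SUP s\<in>{s. two_microlocal x0 c s (\<sigma> - s)}. ereal s)"

definition I_set :: "real \<Rightarrow> (nat \<Rightarrow> nat set) \<Rightarrow> (nat \<Rightarrow> real) \<Rightarrow> (nat \<times> int) set" where
  "I_set x0 \<Lambda> r = {(j, k). (j, k) \<in> loc_dom x0 \<and>
      (\<exists>m. j \<in> \<Lambda> m \<and> \<lfloor>\<bar>real_of_int k - 2 ^ j * x0\<bar>\<rfloor> = \<lfloor>2 powr (real j * r m)\<rfloor>)}"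

end

theory Submission
  imports Defs
begin


lemma S'_decr:
  fixes S' S'' :: "real \<Rightarrow> real"
  assumes "\<And>x. (S' has_real_derivative S'' x) (at x)" "\<And>x. S'' x < 0" "a < b"
  shows "S' b < S' a"
  using DERIV_neg_imp_decreasing[OF assms(3), of S'] assms(1,2) by blast

lemma S'_neg:
  fixes S S' S'' :: "real \<Rightarrow> real"
  assumes d1: "\<And>x. (S has_real_derivative S' x) (at x)"
    and d2: "\<And>x. (S' has_real_derivative S'' x) (at x)" and neg: "\<And>x. S'' x < 0"
    and am: "antimono S"
  shows "S' x < 0"
proof (rule ccontr)
  assume "\<not> S' x < 0"
  then have h: "S' x \<ge> 0" by simp
  obtain z where z: "x - 1 < z" "z < x" "S x - S (x - 1) = (x - (x - 1)) * S' z"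
    using MVT2[of "x - 1" x S S'] d1 by auto
  have "S' z > S' x" using S'_decr[OF d2 neg z(2)] .
  then have "S x > S (x - 1)" using z(3) h by simp
  moreover have "S x \<le> S (x - 1)" using am by (simp add: antimono_def)
  ultimately show False by simp
qed

lemma tangent:
  fixes S S' S'' :: "real \<Rightarrow> real"
  assumes d1: "\<And>x. (S has_real_derivative S' x) (at x)"
    and d2: "\<And>x. (S' has_real_derivative S'' x) (at x)" and neg: "\<And>x. S'' x < 0"
  shows "S y \<le> S x + S' x * (y - x)"
proof (cases "x < y")
  case True
  obtain z where z: "x < z" "z < y" "S y - S x = (y - x) * S' z"
    using MVT2[OF True, of S S'] d1 by auto
  have "S' z < S' x" using S'_decr[OF d2 neg z(1)] .
  then have "(y - x) * S' z \<le> (y - x) * S' x" using True by (simp add: mult_left_mono)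
  then show ?thesis using z(3) by (simp add: algebra_simps)
next
  case False
  show ?thesis
  proof (cases "y < x")
    case True
    obtain z where z: "y < z" "z < x" "S x - S y = (x - y) * S' z"
      using MVT2[OF True, of S S'] d1 by auto
    have "S' x < S' z" using S'_decr[OF d2 neg z(2)] .
    then have "(x - y) * S' x \<le> (x - y) * S' z" using True by (simp add: mult_left_mono)
    then show ?thesis using z(3) by (simp add: algebra_simps)
  next
    case False
    then show ?thesis using \<open>\<not> x < y\<close> by simp
  qed
qed

lemma G_bound:
  fixes S S' S'' :: "real \<Rightarrow> real" and t y :: real
  assumes d1: "\<And>x. (S has_real_derivative S' x) (at x)"
    and d2: "\<And>x. (S' has_real_derivative S'' x) (at x)" and neg: "\<And>x. S'' x < 0"
    and am: "antimono S"
  defines "\<beta> \<equiv> S' t / (S' t - 1)"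
  shows "(1 - \<beta>) * S y + \<beta> * y \<le> (1 - \<beta>) * S t + \<beta> * t"
proof -
  have n: "S' t < 0" using S'_neg[OF d1 d2 neg am] .
  have b1: "1 - \<beta> = -1 / (S' t - 1)" using n unfolding \<beta>_def by (simp add: field_simps)
  have pos: "1 - \<beta> > 0" using n b1 by (simp add: divide_neg_neg)
  have z: "(1 - \<beta>) * S' t + \<beta> = 0" using n unfolding b1 \<beta>_def by (simp add: field_simps)
  have "(1 - \<beta>) * S y \<le> (1 - \<beta>) * (S t + S' t * (y - t))"
    using tangent[OF d1 d2 neg, of y t] pos by (simp add: mult_left_mono)
  also have "\<dots> = (1 - \<beta>) * S t + ((1 - \<beta>) * S' t + \<beta>) * (y - t) - \<beta> * (y - t)"
    by (simp add: algebra_simps)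
  also have "\<dots> = (1 - \<beta>) * S t - \<beta> * (y - t)" using z by simp
  finally show ?thesis by (simp add: algebra_simps)
qed

lemma interp:
  fixes p q \<beta> Sx x Mp Mq :: real
  assumes "p < q" "p \<le> \<beta>" "\<beta> \<le> q" "(1 - p) * Sx + p * x \<le> Mp" "(1 - q) * Sx + q * x \<le> Mq"
  shows "(1 - \<beta>) * Sx + \<beta> * x \<le> ((q - \<beta>) * Mp + (\<beta> - p) * Mq) / (q - p)"
proof -
  have e: "(1 - \<beta>) * Sx + \<beta> * x = ((q - \<beta>) * ((1 - p) * Sx + p * x) + (\<beta> - p) * ((1 - q) * Sx + q * x)) / (q - p)"
    using assms(1) by (simp add: field_simps)
  have "(q - \<beta>) * ((1 - p) * Sx + p * x) \<le> (q - \<beta>) * Mp" using assms by (simp add: mult_left_mono)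
  moreover have "(\<beta> - p) * ((1 - q) * Sx + q * x) \<le> (\<beta> - p) * Mq" using assms by (simp add: mult_left_mono)
  ultimately show ?thesis unfolding e using assms(1) by (simp add: divide_right_mono)
qed



lemma loc_dom_bound:
  assumes "(j, k) \<in> loc_dom x0" "j \<le> N"
  shows "k \<in> {- \<lceil>2 ^ N * (\<bar>x0\<bar> + 1)\<rceil> .. \<lceil>2 ^ N * (\<bar>x0\<bar> + 1)\<rceil>}"
proof -
  have h: "\<bar>real_of_int k - 2 ^ j * x0\<bar> < 2 ^ j" using assms(1) by (simp add: loc_dom_def)
  have "\<bar>real_of_int k\<bar> \<le> \<bar>real_of_int k - 2 ^ j * x0\<bar> + 2 ^ j * \<bar>x0\<bar>"
    using abs_triangle_ineq[of "real_of_int k - 2^j*x0" "2^j*x0"] by (simp add: abs_mult)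
  also have "\<dots> \<le> 2 ^ j * (\<bar>x0\<bar> + 1)" using h by (simp add: algebra_simps)
  also have "\<dots> \<le> 2 ^ N * (\<bar>x0\<bar> + 1)"
    using assms(2) by (intro mult_right_mono) (auto intro: power_increasing)
  finally have "\<bar>real_of_int k\<bar> \<le> 2 ^ N * (\<bar>x0\<bar> + 1)" .
  then have "\<bar>real_of_int k\<bar> \<le> real_of_int \<lceil>2 ^ N * (\<bar>x0\<bar> + 1)\<rceil>"
    by (meson le_of_int_ceiling order_trans)
  then show ?thesis by (simp add: abs_le_iff)
qed

lemma slice_finite: "finite {k. (j, k) \<in> loc_dom x0}"
  by (rule finite_subset[of _ "{- \<lceil>2 ^ j * (\<bar>x0\<bar> + 1)\<rceil> .. \<lceil>2 ^ j * (\<bar>x0\<bar> + 1)\<rceil>}"])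
     (use loc_dom_bound in auto)

lemma slice_ne: "(j, \<lfloor>2 ^ j * x0\<rfloor>) \<in> loc_dom x0"
proof -
  have "\<bar>real_of_int \<lfloor>2 ^ j * x0\<rfloor> - 2 ^ j * x0\<bar> < 1"
    by (smt (verit) of_int_floor_le real_of_int_floor_gt_diff_one)
  also have "(1::real) \<le> 2 ^ j" by simp
  finally show ?thesis by (simp add: loc_dom_def)
qed

lemma low_finite: "finite {p \<in> loc_dom x0. fst p < N}"
  by (rule finite_subset[of _ "{..<N} \<times> {- \<lceil>2 ^ N * (\<bar>x0\<bar> + 1)\<rceil> .. \<lceil>2 ^ N * (\<bar>x0\<bar> + 1)\<rceil>}"])
     (use loc_dom_bound in fastforce)+



lemma bounded_P:
  fixes Cc lam :: "nat \<Rightarrow> int \<Rightarrow> real" and Cx \<epsilon> :: real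
  assumes Cc_pos: "\<And>j k. (j, k) \<in> loc_dom x0 \<Longrightarrow> Cc j k > 0"
    and lam_pos: "\<And>j k. (j, k) \<in> loc_dom x0 \<Longrightarrow> lam j k > 0"
    and cond_i: "\<And>C kk. (\<forall>j. (j, kk j) \<in> loc_dom x0) \<Longrightarrow>
        limsup (\<lambda>j. ereal (log 2 (Cc j (kk j)) / real j + C * (log 2 (lam j (kk j)) / real j))) \<le> 0"
    and epos: "\<epsilon> > 0"
  shows "\<exists>Q>0. \<forall>j k. (j, k) \<in> loc_dom x0 \<longrightarrow> Cc j k * lam j k powr Cx * 2 powr (- real j * \<epsilon>) \<le> Q"
proof -
  define P where "P j k = Cc j k * lam j k powr Cx * 2 powr (- real j * \<epsilon>)" for j k
  define sl where "sl j = {k. (j, k) \<in> loc_dom x0}" for j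
  have P_pos: "P j k > 0" if "(j, k) \<in> loc_dom x0" for j k
    using Cc_pos[OF that] lam_pos[OF that] unfolding P_def by simp
  have ex: "\<exists>k. k \<in> sl j \<and> (\<forall>k'\<in>sl j. P j k' \<le> P j k)" for j
  proof -
    have fin: "finite (P j ` sl j)" using slice_finite unfolding sl_def by simp
    have ne: "P j ` sl j \<noteq> {}" using slice_ne unfolding sl_def by blast
    obtain k where "k \<in> sl j" "P j k = Max (P j ` sl j)" using Max_in[OF fin ne] by auto
    then show ?thesis using Max_ge[OF fin] by auto
  qed
  define kk where "kk j = (SOME k. k \<in> sl j \<and> (\<forall>k'\<in>sl j. P j k' \<le> P j k))" for j
  have kk: "kk j \<in> sl j" "\<And>k'. k' \<in> sl j \<Longrightarrow> P j k' \<le> P j (kk j)" for j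
    using someI_ex[OF ex[of j]] unfolding kk_def by blast+
  have kkd: "\<forall>j. (j, kk j) \<in> loc_dom x0" using kk(1) unfolding sl_def by auto
  have "limsup (\<lambda>j. ereal (log 2 (Cc j (kk j)) / real j + Cx * (log 2 (lam j (kk j)) / real j))) < ereal \<epsilon>"
    using cond_i[OF kkd, of Cx] epos by (meson ereal_less(2) le_less_trans zero_less_real_of_ereal)
  from Limsup_lessD[OF this] obtain N where
    N: "\<And>j. j \<ge> N \<Longrightarrow> log 2 (Cc j (kk j)) / real j + Cx * (log 2 (lam j (kk j)) / real j) < \<epsilon>"
    by (auto simp: eventually_sequentially)
  define N' where "N' = max N 1"
  have big: "P j k < 1" if "(j, k) \<in> loc_dom x0" "j \<ge> N'" for j k
  proof -
    have jp: "real j > 0" using that(2) unfolding N'_def by simp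
    have c0: "Cc j (kk j) > 0" "lam j (kk j) > 0" using Cc_pos lam_pos kkd by auto
    have "log 2 (Cc j (kk j)) / real j + Cx * (log 2 (lam j (kk j)) / real j) < \<epsilon>"
      using N that(2) unfolding N'_def by simp
    then have "(log 2 (Cc j (kk j)) + Cx * log 2 (lam j (kk j))) / real j < \<epsilon>"
      by (simp add: add_divide_distrib)
    then have l: "log 2 (Cc j (kk j)) + Cx * log 2 (lam j (kk j)) < real j * \<epsilon>"
      using jp by (simp add: divide_less_eq mult.commute)
    have "log 2 (Cc j (kk j) * lam j (kk j) powr Cx) = log 2 (Cc j (kk j)) + Cx * log 2 (lam j (kk j))"
      using c0 by (simp add: log_mult log_powr)
    then have "Cc j (kk j) * lam j (kk j) powr Cx < 2 powr (real j * \<epsilon>)"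
      using l c0 log_less_iff[of 2 "Cc j (kk j) * lam j (kk j) powr Cx" "real j * \<epsilon>"] by simp
    then have "P j (kk j) < 2 powr (real j * \<epsilon>) * 2 powr (- real j * \<epsilon>)"
      unfolding P_def by (intro mult_strict_right_mono) auto
    also have "\<dots> = 1" by (simp add: powr_add[symmetric])
    finally have "P j (kk j) < 1" .
    moreover have "P j k \<le> P j (kk j)" using kk(2)[of k j] that(1) unfolding sl_def by simp
    ultimately show ?thesis by simp
  qed
  define F where "F = {p \<in> loc_dom x0. fst p < N'}"
  have finF: "finite F" unfolding F_def by (rule low_finite)
  define Q where "Q = 1 + (\<Sum>p\<in>F. P (fst p) (snd p))"
  have sum_nn: "(\<Sum>p\<in>F. P (fst p) (snd p)) \<ge> 0"
    by (rule sum_nonneg) (use P_pos in \<open>auto simp: F_def less_imp_le\<close>)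
  have "P j k \<le> Q" if "(j, k) \<in> loc_dom x0" for j k
  proof (cases "j \<ge> N'")
    case True
    then show ?thesis using big[OF that True] sum_nn unfolding Q_def by simp
  next
    case False
    then have "(j, k) \<in> F" using that unfolding F_def by simp
    then have "P j k \<le> (\<Sum>p\<in>F. P (fst p) (snd p))"
      using member_le_sum[of "(j,k)" F "\<lambda>p. P (fst p) (snd p)"] finF P_pos
      by (force simp: F_def less_imp_le)
    then show ?thesis unfolding Q_def by simp
  qed
  moreover have "Q > 0" using sum_nn unfolding Q_def by simp
  ultimately show ?thesis unfolding P_def by blast
qed



lemma expo:
  fixes J t a \<delta> :: real
  assumes "J \<ge> 0" "0 \<le> t" "t \<le> J + 1" "a > 0" "\<delta> > 0"
  shows "- J * a + (a - \<delta>) * t \<le> \<bar>a - \<delta>\<bar> - J * min a \<delta>"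
proof (cases "a \<ge> \<delta>")
  case True
  have "(a - \<delta>) * t \<le> (a - \<delta>) * (J + 1)" using True assms by (intro mult_left_mono) auto
  then show ?thesis using True by (simp add: algebra_simps min_def)
next
  case False
  have "(a - \<delta>) * t \<le> 0" using False assms by (simp add: mult_nonpos_nonneg)
  then show ?thesis using False by (simp add: algebra_simps min_def)
qed

lemma upper:
  fixes x0 :: real and S S' :: "real \<Rightarrow> real" and Cc lam c :: "nat \<Rightarrow> int \<Rightarrow> real"
  assumes S_deriv: "\<And>\<sigma>. (S has_real_derivative S' \<sigma>) (at \<sigma>)"
    and Cc_pos: "\<And>j k. (j, k) \<in> loc_dom x0 \<Longrightarrow> Cc j k > 0"
    and lam_pos: "\<And>j k. (j, k) \<in> loc_dom x0 \<Longrightarrow> lam j k > 0"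
    and cond_i: "\<And>C kk. (\<forall>j. (j, kk j) \<in> loc_dom x0) \<Longrightarrow>
        limsup (\<lambda>j. ereal (log 2 (Cc j (kk j)) / real j + C * (log 2 (lam j (kk j)) / real j))) \<le> 0"
    and c_bound: "\<And>j k. (j, k) \<in> loc_dom x0 \<Longrightarrow>
        \<bar>c j k\<bar> \<le> Cc j k * (INF \<sigma>. 2 powr (- real j * S \<sigma>) *
            ((1 + \<bar>real_of_int k - 2 ^ j * x0\<bar>) / lam j k) powr (S \<sigma> - \<sigma>))"
    and slt: "s < S \<sigma>"
  shows "two_microlocal x0 c s (\<sigma> - s)"
proof -
  have "isCont S \<sigma>" using S_deriv DERIV_isCont by blast
  then have "(S \<longlongrightarrow> S \<sigma>) (at \<sigma>)" by (simp add: isCont_def)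
  then have "eventually (\<lambda>y. S y > s) (at \<sigma>)" using slt by (rule order_tendstoD(1))
  then obtain d where d: "d > 0" "\<And>y. y \<noteq> \<sigma> \<Longrightarrow> dist y \<sigma> < d \<Longrightarrow> S y > s"
    by (auto simp: eventually_at)
  define \<delta> where "\<delta> = d / 2"
  have dpos: "\<delta> > 0" using d unfolding \<delta>_def by simp
  define \<sigma>1 where "\<sigma>1 = \<sigma> + \<delta>"
  have s1: "S \<sigma>1 > s" using d(2)[of \<sigma>1] d(1) unfolding \<sigma>1_def \<delta>_def by (simp add: dist_real_def)
  define a where "a = S \<sigma>1 - s"
  have apos: "a > 0" using s1 unfolding a_def by simp
  define \<epsilon> where "\<epsilon> = min a \<delta>"
  have epos: "\<epsilon> > 0" using apos dpos unfolding \<epsilon>_def by simp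
  define Cx where "Cx = \<sigma>1 - S \<sigma>1"
  define B where "B = \<bar>a - \<delta>\<bar>"
  obtain Q where Q: "Q > 0" "\<And>j k. (j, k) \<in> loc_dom x0 \<Longrightarrow> Cc j k * lam j k powr Cx * 2 powr (- real j * \<epsilon>) \<le> Q"
    using bounded_P[where Cc=Cc and lam=lam and Cx=Cx and \<epsilon>=\<epsilon>, OF Cc_pos lam_pos cond_i epos] by blast
  have main: "\<bar>c j k\<bar> \<le> (Q * 2 powr B) * 2 powr (- real j * s) * (1 + \<bar>real_of_int k - 2 ^ j * x0\<bar>) powr (- (\<sigma> - s))"
    if jk: "(j, k) \<in> loc_dom x0" for j k
  proof -
    define D where "D = 1 + \<bar>real_of_int k - 2 ^ j * x0\<bar>"
    have Dge: "D \<ge> 1" unfolding D_def by simp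
    have Dlt: "D < 2 ^ (j + 1)"
    proof -
      have o: "(1::real) \<le> 2 ^ j" by simp
      have h: "\<bar>real_of_int k - 2 ^ j * x0\<bar> < 2 ^ j" using jk unfolding loc_dom_def by simp
      have "(2::real) ^ (j + 1) = 2 * 2 ^ j" by simp
      then show ?thesis unfolding D_def using o h by linarith
    qed
    define t where "t = log 2 D"
    have t0: "t \<ge> 0" unfolding t_def using Dge by simp
    have t1: "t \<le> real j + 1"
    proof -
      have "log 2 D \<le> log 2 (2 ^ (j + 1))" using Dge Dlt by simp
      also have "\<dots> = real j + 1" by (simp only: log_nat_power) simp
      finally show ?thesis unfolding t_def .
    qed
    have Dp: "D = 2 powr t" unfolding t_def using Dge by simp
    have lp: "lam j k > 0" "Cc j k > 0" using lam_pos[OF jk] Cc_pos[OF jk] by auto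
    define T where "T = 2 powr (- real j * S \<sigma>1) * (D / lam j k) powr (S \<sigma>1 - \<sigma>1)"
    have Teq: "T = lam j k powr Cx * 2 powr (- real j * S \<sigma>1 + (S \<sigma>1 - \<sigma>1) * t)"
    proof -
      have "(D / lam j k) powr (S \<sigma>1 - \<sigma>1) = D powr (S \<sigma>1 - \<sigma>1) * lam j k powr Cx"
      proof -
        have "Cx = - (S \<sigma>1 - \<sigma>1)" unfolding Cx_def by simp
        moreover have "(D / lam j k) powr e = D powr e * lam j k powr (- e)" for e
          using lp Dge by (simp add: powr_divide powr_minus_divide)
        ultimately show ?thesis by simp
      qed
      moreover have "D powr (S \<sigma>1 - \<sigma>1) = 2 powr (t * (S \<sigma>1 - \<sigma>1))"
        by (subst Dp) (simp add: powr_powr)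
      moreover have "2 powr (- real j * S \<sigma>1 + (S \<sigma>1 - \<sigma>1) * t) = 2 powr (- real j * S \<sigma>1) * 2 powr (t * (S \<sigma>1 - \<sigma>1))"
        by (simp add: powr_add[symmetric] mult.commute)
      ultimately show ?thesis unfolding T_def by (simp only: mult_ac)
    qed
    have INFle: "(INF \<sigma>. 2 powr (- real j * S \<sigma>) * (D / lam j k) powr (S \<sigma> - \<sigma>)) \<le> T"
      unfolding T_def by (rule cINF_lower) (auto intro!: bdd_belowI[where m=0])
    have R: "2 powr (- real j * s) * D powr (- (\<sigma> - s)) = 2 powr (- real j * s - (\<sigma> - s) * t)"
      by (subst Dp) (simp add: powr_powr powr_add[symmetric] algebra_simps)
    have ex: "- real j * S \<sigma>1 + (S \<sigma>1 - \<sigma>1) * t \<le> B + (- real j * \<epsilon>) + (- real j * s - (\<sigma> - s) * t)"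
    proof -
      have "- real j * a + (a - \<delta>) * t \<le> B - real j * \<epsilon>"
        using expo[of "real j" t a \<delta>] t0 t1 apos dpos unfolding B_def \<epsilon>_def by simp
      then show ?thesis unfolding a_def \<sigma>1_def by (simp add: algebra_simps)
    qed
    have "2 powr (- real j * S \<sigma>1 + (S \<sigma>1 - \<sigma>1) * t) \<le> 2 powr (B + (- real j * \<epsilon>) + (- real j * s - (\<sigma> - s) * t))"
      using ex by simp
    also have "\<dots> = 2 powr B * 2 powr (- real j * \<epsilon>) * (2 powr (- real j * s) * D powr (- (\<sigma> - s)))"
      unfolding R by (simp only: powr_add)
    finally have E: "2 powr (- real j * S \<sigma>1 + (S \<sigma>1 - \<sigma>1) * t) \<le> 2 powr B * 2 powr (- real j * \<epsilon>) * (2 powr (- real j * s) * D powr (- (\<sigma> - s)))" .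
    have "\<bar>c j k\<bar> \<le> Cc j k * T"
      using c_bound[OF jk] INFle lp unfolding D_def by (meson mult_left_mono order_trans less_imp_le)
    also have "\<dots> = Cc j k * lam j k powr Cx * 2 powr (- real j * S \<sigma>1 + (S \<sigma>1 - \<sigma>1) * t)"
      unfolding Teq by simp
    also have "\<dots> \<le> Cc j k * lam j k powr Cx * (2 powr B * 2 powr (- real j * \<epsilon>) * (2 powr (- real j * s) * D powr (- (\<sigma> - s))))"
      using E lp by (intro mult_left_mono) auto
    also have "\<dots> = (Cc j k * lam j k powr Cx * 2 powr (- real j * \<epsilon>)) * (2 powr B * (2 powr (- real j * s) * D powr (- (\<sigma> - s))))"
      by (simp add: algebra_simps)
    also have "\<dots> \<le> Q * (2 powr B * (2 powr (- real j * s) * D powr (- (\<sigma> - s))))"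
      using Q(2)[OF jk] by (intro mult_right_mono) auto
    finally show ?thesis unfolding D_def by (simp add: algebra_simps)
  qed
  show ?thesis unfolding two_microlocal_def
    using main Q(1) by (intro exI[of _ "Q * 2 powr B"]) auto
qed



lemma rho_props:
  fixes S S' S'' :: "real \<Rightarrow> real"
  assumes d1: "\<And>x. (S has_real_derivative S' x) (at x)"
    and d2: "\<And>x. (S' has_real_derivative S'' x) (at x)" and neg: "\<And>x. S'' x < 0"
    and am: "antimono S"
  shows "0 < S' x / (S' x - 1)" "S' x / (S' x - 1) < 1"
    "x < y \<Longrightarrow> S' x / (S' x - 1) < S' y / (S' y - 1)"
proof -
  have n: "\<And>z. S' z < 0" using S'_neg[OF d1 d2 neg am] .
  show "0 < S' x / (S' x - 1)" using n[of x] by (simp add: divide_neg_neg)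
  show "S' x / (S' x - 1) < 1" using n[of x] by (simp add: divide_less_eq)
  assume "x < y"
  then have "S' y < S' x" using S'_decr[OF d2 neg] by blast
  then show "S' x / (S' x - 1) < S' y / (S' y - 1)" using n[of x] n[of y]
    by (simp add: divide_less_eq less_divide_eq field_simps)
qed

lemma I_exists:
  fixes r :: "nat \<Rightarrow> real"
  assumes "j \<ge> 1" "0 \<le> r m" "r m < 1" "j \<in> \<Lambda> m"
  shows "\<exists>k. (j, k) \<in> I_set x0 \<Lambda> r \<and>
     \<lfloor>\<bar>real_of_int k - 2 ^ j * x0\<bar>\<rfloor> = \<lfloor>2 powr (real j * r m)\<rfloor>"
proof -
  define N where "N = \<lfloor>2 powr (real j * r m)\<rfloor>"
  define k where "k = \<lceil>2 ^ j * x0 + real_of_int N\<rceil>"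
  have "1 \<le> 2 powr (real j * r m)" using assms(2) by (intro ge_one_powr_ge_zero) auto
  then have N1: "N \<ge> 1" unfolding N_def by (simp add: le_floor_iff)
  have "real j * r m < real j" using assms by (simp add: mult_less_cancel_left1)
  then have "2 powr (real j * r m) < 2 powr (real j)" by simp
  then have "N < 2 ^ j" unfolding N_def floor_less_iff by (simp add: powr_realpow)
  then have N2: "real_of_int N + 1 \<le> 2 ^ j" by (metis int_less_real_le of_int_numeral of_int_power)
  have k1: "real_of_int k - 2 ^ j * x0 \<ge> real_of_int N" unfolding k_def by linarith
  have k2: "real_of_int k - 2 ^ j * x0 < real_of_int N + 1" unfolding k_def by linarith
  have ab: "\<bar>real_of_int k - 2 ^ j * x0\<bar> = real_of_int k - 2 ^ j * x0" using k1 N1 by simp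
  have fl: "\<lfloor>\<bar>real_of_int k - 2 ^ j * x0\<bar>\<rfloor> = N" unfolding ab using k1 k2 by (simp add: floor_eq_iff)
  have "(j, k) \<in> loc_dom x0" unfolding loc_dom_def using ab k2 N2 by simp
  then have "(j, k) \<in> I_set x0 \<Lambda> r" unfolding I_set_def using fl assms(4) N_def by blast
  then show ?thesis using fl N_def by blast
qed



lemma gamma_bound:
  fixes z rr :: real
  assumes "j > 0" "0 \<le> rr" "\<lfloor>z\<rfloor> = \<lfloor>2 powr (real j * rr)\<rfloor>" "z \<ge> 0"
  shows "\<bar>log 2 (1 + z) / real j - rr\<bar> \<le> 2 / real j"
proof -
  define y where "y = 2 powr (real j * rr)"
  have y1: "y \<ge> 1" unfolding y_def using assms by (intro ge_one_powr_ge_zero) auto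
  have zy: "\<bar>z - y\<bar> < 1" using assms(3) unfolding y_def
    by (smt (verit, best) floor_eq_iff of_int_floor_le real_of_int_floor_gt_diff_one)
  have l1: "log 2 y = real j * rr" unfolding y_def by simp
  have "log 2 y < log 2 (1 + z)" using zy y1 by (subst log_less_cancel_iff) auto
  moreover have "log 2 (1 + z) \<le> log 2 (4 * y)" using zy y1 assms(4) by (subst log_le_cancel_iff) auto
  moreover have "log 2 (4 * y) = 2 + log 2 y"
  proof -
    have "log 2 (4::real) = log 2 (2 ^ 2)" by simp
    also have "\<dots> = 2" by (simp only: log_nat_power) simp
    finally show ?thesis using y1 by (simp add: log_mult)
  qed
  ultimately have h: "\<bar>log 2 (1 + z) - real j * rr\<bar> \<le> 2" using l1 by linarith
  have "log 2 (1 + z) / real j - rr = (log 2 (1 + z) - real j * rr) / real j" using assms(1)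
    by (simp add: field_simps)
  then show ?thesis using h assms(1) by (simp add: abs_divide divide_right_mono)
qed

lemma Kbound:
  fixes S :: "real \<Rightarrow> real" and a \<alpha> b Ma M Mb \<beta> x :: real
  assumes "a < \<alpha>" "\<alpha> < b"
    and Ga: "(1 - a) * S x + a * x \<le> Ma"
    and G\<alpha>: "(1 - \<alpha>) * S x + \<alpha> * x \<le> M"
    and Gb: "(1 - b) * S x + b * x \<le> Mb"
    and close: "\<bar>\<beta> - \<alpha>\<bar> \<le> min (\<alpha> - a) (b - \<alpha>)"
  shows "(1 - \<beta>) * S x + \<beta> * x \<le> M + (\<bar>Mb - M\<bar> / (b - \<alpha>) + \<bar>Ma - M\<bar> / (\<alpha> - a)) * \<bar>\<beta> - \<alpha>\<bar>"
proof (cases "\<beta> \<ge> \<alpha>")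
  case True
  have "(1 - \<beta>) * S x + \<beta> * x \<le> ((b - \<beta>) * M + (\<beta> - \<alpha>) * Mb) / (b - \<alpha>)"
    using interp[OF assms(2) True _ G\<alpha> Gb] close by auto
  also have "\<dots> = M + (\<beta> - \<alpha>) * ((Mb - M) / (b - \<alpha>))" using assms(2) by (simp add: field_simps)
  also have "\<dots> \<le> M + (\<beta> - \<alpha>) * (\<bar>Mb - M\<bar> / (b - \<alpha>))"
    using True assms(2) by (intro add_left_mono mult_left_mono divide_right_mono) auto
  also have "\<dots> \<le> M + (\<beta> - \<alpha>) * (\<bar>Mb - M\<bar> / (b - \<alpha>) + \<bar>Ma - M\<bar> / (\<alpha> - a))"
    using True assms(1) by (intro add_left_mono mult_left_mono) auto
  finally show ?thesis using True by (simp add: mult.commute)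
next
  case False
  have "(1 - \<beta>) * S x + \<beta> * x \<le> ((\<alpha> - \<beta>) * Ma + (\<beta> - a) * M) / (\<alpha> - a)"
    using interp[OF assms(1) _ _ Ga G\<alpha>] close False by auto
  also have "\<dots> = M + (\<alpha> - \<beta>) * ((Ma - M) / (\<alpha> - a))" using assms(1) by (simp add: field_simps)
  also have "\<dots> \<le> M + (\<alpha> - \<beta>) * (\<bar>Ma - M\<bar> / (\<alpha> - a))"
    using False assms(1) by (intro add_left_mono mult_left_mono divide_right_mono) auto
  also have "\<dots> \<le> M + (\<alpha> - \<beta>) * (\<bar>Mb - M\<bar> / (b - \<alpha>) + \<bar>Ma - M\<bar> / (\<alpha> - a))"
    using False assms(2) by (intro add_left_mono mult_left_mono) auto
  finally show ?thesis using False by (simp add: mult.commute)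
qed



lemma neg_neg_eq: "((s::real) - \<sigma>) * X = - ((\<sigma> - s) * X)" by (simp add: algebra_simps)

lemma lower:
  fixes x0 :: real
    and S S' S'' :: "real \<Rightarrow> real"
    and \<Lambda> :: "nat \<Rightarrow> nat set"
    and r :: "nat \<Rightarrow> real"
    and Cc lam c :: "nat \<Rightarrow> int \<Rightarrow> real"
  assumes S_deriv: "\<And>\<sigma>. (S has_real_derivative S' \<sigma>) (at \<sigma>)"
    and S'_deriv: "\<And>\<sigma>. (S' has_real_derivative S'' \<sigma>) (at \<sigma>)"
    and S_decr: "antimono S"
    and S''_neg: "\<And>\<sigma>. S'' \<sigma> < 0"
    and Lam_inf: "\<And>m. infinite (\<Lambda> m)"
    and r_sub: "range r \<subseteq> range (\<lambda>\<sigma>. S' \<sigma> / (S' \<sigma> - 1))"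
    and r_dense: "range (\<lambda>\<sigma>. S' \<sigma> / (S' \<sigma> - 1)) \<subseteq> closure (range r)"
    and Cc_pos: "\<And>j k. (j, k) \<in> loc_dom x0 \<Longrightarrow> Cc j k > 0"
    and lam_pos: "\<And>j k. (j, k) \<in> loc_dom x0 \<Longrightarrow> lam j k > 0"
    and cond_ii: "\<And>jj kk. filterlim jj at_top sequentially \<Longrightarrow>
        (\<forall>n. (jj n, kk n) \<in> I_set x0 \<Lambda> r) \<Longrightarrow>
        ((\<lambda>n. log 2 (Cc (jj n) (kk n)) / real (jj n)) \<longlonglongrightarrow> 0) \<and>
        ((\<lambda>n. log 2 (lam (jj n) (kk n)) / real (jj n)) \<longlonglongrightarrow> 0)"
    and c_eq: "\<And>j k. (j, k) \<in> I_set x0 \<Lambda> r \<Longrightarrow>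
        \<bar>c j k\<bar> = Cc j k * (INF \<sigma>. 2 powr (- real j * S \<sigma>) *
            ((1 + \<bar>real_of_int k - 2 ^ j * x0\<bar>) / lam j k) powr (S \<sigma> - \<sigma>))"
    and tm: "two_microlocal x0 c s (\<sigma> - s)"
  shows "s \<le> S \<sigma>"
proof (rule ccontr)
  assume "\<not> s \<le> S \<sigma>"
  then have gt: "s > S \<sigma>" by simp
  define \<rho> where "\<rho> x = S' x / (S' x - 1)" for x
  define M where "M \<tau> = (1 - \<rho> \<tau>) * S \<tau> + \<rho> \<tau> * \<tau>" for \<tau>
  have GB: "(1 - \<rho> \<tau>) * S y + \<rho> \<tau> * y \<le> M \<tau>" for \<tau> y
    unfolding M_def \<rho>_def by (rule G_bound[OF S_deriv S'_deriv S''_neg S_decr])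
  note rp = rho_props[OF S_deriv S'_deriv S''_neg S_decr]
  define \<alpha> where "\<alpha> = \<rho> \<sigma>"
  define a where "a = \<rho> (\<sigma> - 1)"
  define b where "b = \<rho> (\<sigma> + 1)"
  have a\<alpha>: "a < \<alpha>" unfolding a_def \<alpha>_def \<rho>_def by (rule rp(3)) simp
  have \<alpha>b: "\<alpha> < b" unfolding b_def \<alpha>_def \<rho>_def by (rule rp(3)) simp
  have \<alpha>1: "\<alpha> < 1" unfolding \<alpha>_def \<rho>_def by (rule rp(2))
  define K where "K = \<bar>M (\<sigma> + 1) - M \<sigma>\<bar> / (b - \<alpha>) + \<bar>M (\<sigma> - 1) - M \<sigma>\<bar> / (\<alpha> - a)"
  have K0: "K \<ge> 0" unfolding K_def using a\<alpha> \<alpha>b by simp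
  define w where "w = min (\<alpha> - a) (b - \<alpha>)"
  have w0: "w > 0" unfolding w_def using a\<alpha> \<alpha>b by simp
  have KB: "(1 - \<beta>) * S x + \<beta> * x \<le> M \<sigma> + K * \<bar>\<beta> - \<alpha>\<bar>" if "\<bar>\<beta> - \<alpha>\<bar> \<le> w" for \<beta> x
    using Kbound[OF a\<alpha> \<alpha>b, of S x "M (\<sigma> - 1)" "M \<sigma>" "M (\<sigma> + 1)" \<beta>] GB that
    unfolding K_def w_def a_def b_def \<alpha>_def by simp
  define \<eta> where "\<eta> = (1 - \<alpha>) * (s - S \<sigma>) / 2"
  have \<eta>0: "\<eta> > 0" unfolding \<eta>_def using \<alpha>1 gt by simp
  have M\<sigma>: "s * (1 - \<alpha>) + \<sigma> * \<alpha> = M \<sigma> + 2 * \<eta>"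
    unfolding M_def \<eta>_def \<alpha>_def by (simp add: field_simps)
  define \<delta> where "\<delta> = min (\<eta> / (2 * K + \<bar>s - \<sigma>\<bar> + 1)) (w / 2)"
  have \<delta>0: "\<delta> > 0" unfolding \<delta>_def using \<eta>0 w0 K0 by simp
  have \<delta>w: "2 * \<delta> \<le> w" unfolding \<delta>_def by simp
  have \<delta>\<eta>: "\<delta> * (2 * K + \<bar>s - \<sigma>\<bar> + 1) \<le> \<eta>"
  proof -
    have "\<delta> \<le> \<eta> / (2 * K + \<bar>s - \<sigma>\<bar> + 1)" unfolding \<delta>_def by simp
    then show ?thesis using K0 by (simp add: le_divide_eq)
  qed
  have "\<alpha> \<in> closure (range r)" using r_dense unfolding \<alpha>_def \<rho>_def by blast
  then obtain m where m: "dist (r m) \<alpha> < \<delta>" using \<delta>0 unfolding closure_approachable by blast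
  obtain \<tau> where \<tau>: "r m = \<rho> \<tau>" using r_sub unfolding \<rho>_def by blast
  have rm0: "0 \<le> r m" "r m < 1" using rp(1)[of \<tau>] rp(2)[of \<tau>] unfolding \<tau> \<rho>_def by auto
  define jj where "jj n = enumerate (\<Lambda> m) (Suc n)" for n
  have smj: "strict_mono jj"
    unfolding jj_def using strict_mono_enumerate[OF Lam_inf[of m]] by (simp add: strict_mono_def)
  have jjlim: "filterlim jj at_top sequentially" using smj by (rule filterlim_subseq)
  have jj1: "jj n \<ge> 1" for n
    unfolding jj_def using enumerate_mono[OF zero_less_Suc Lam_inf[of m], of n] by simp
  have jjp: "jj n > 0" for n using jj1[of n] by simp
  have jjL: "jj n \<in> \<Lambda> m" for n unfolding jj_def by (rule enumerate_in_set[OF Lam_inf])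
  define kk where "kk n = (SOME k. (jj n, k) \<in> I_set x0 \<Lambda> r \<and>
     \<lfloor>\<bar>real_of_int k - 2 ^ jj n * x0\<bar>\<rfloor> = \<lfloor>2 powr (real (jj n) * r m)\<rfloor>)" for n
  have kk: "(jj n, kk n) \<in> I_set x0 \<Lambda> r"
    "\<lfloor>\<bar>real_of_int (kk n) - 2 ^ jj n * x0\<bar>\<rfloor> = \<lfloor>2 powr (real (jj n) * r m)\<rfloor>" for n
    using someI_ex[OF I_exists[where r=r and m=m and \<Lambda>=\<Lambda> and j="jj n", OF jj1 rm0 jjL]] unfolding kk_def by blast+
  have kkd: "(jj n, kk n) \<in> loc_dom x0" for n using kk(1) unfolding I_set_def by blast
  have lims: "(\<lambda>n. log 2 (Cc (jj n) (kk n)) / real (jj n)) \<longlonglongrightarrow> 0"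
    "(\<lambda>n. log 2 (lam (jj n) (kk n)) / real (jj n)) \<longlonglongrightarrow> 0"
    using cond_ii[OF jjlim] kk(1) by auto
  define D where "D n = 1 + \<bar>real_of_int (kk n) - 2 ^ jj n * x0\<bar>" for n
  define \<gamma> where "\<gamma> n = log 2 (D n) / real (jj n)" for n
  have rj: "filterlim (\<lambda>n. real (jj n)) at_top sequentially"
    using filterlim_compose[OF filterlim_real_sequentially jjlim] .
  have inv0: "(\<lambda>n. X / real (jj n)) \<longlonglongrightarrow> 0" for X :: real
    by (rule tendsto_divide_0[OF tendsto_const]) (rule filterlim_at_top_imp_at_infinity[OF rj])
  have \<gamma>lim: "\<gamma> \<longlonglongrightarrow> r m"
  proof -
    have "(\<lambda>n. \<gamma> n - r m) \<longlonglongrightarrow> 0"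
    proof (rule Lim_null_comparison[OF _ inv0[of 2]])
      show "\<forall>\<^sub>F n in sequentially. norm (\<gamma> n - r m) \<le> 2 / real (jj n)"
        using gamma_bound[of "jj n" "r m" "\<bar>real_of_int (kk n) - 2 ^ jj n * x0\<bar>" for n] jjp rm0 kk(2)
        unfolding \<gamma>_def D_def by (auto intro!: always_eventually)
    qed
    then show ?thesis by (simp add: LIM_zero_iff)
  qed
  define \<beta> where "\<beta> n = \<gamma> n - log 2 (lam (jj n) (kk n)) / real (jj n)" for n
  have \<beta>lim: "\<beta> \<longlonglongrightarrow> r m" unfolding \<beta>_def using tendsto_diff[OF \<gamma>lim lims(2)] by simp
  obtain C0 where C0: "C0 > 0" "\<And>j k. (j, k) \<in> loc_dom x0 \<Longrightarrow>
        \<bar>c j k\<bar> \<le> C0 * 2 powr (- real j * s) * (1 + \<bar>real_of_int k - 2 ^ j * x0\<bar>) powr (- (\<sigma> - s))"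
    using tm unfolding two_microlocal_def by blast
  define Fn where "Fn n = log 2 (Cc (jj n) (kk n)) / real (jj n) - log 2 C0 / real (jj n) - (s - \<sigma>) * \<gamma> n" for n
  have Flim: "Fn \<longlonglongrightarrow> 0 - 0 - (s - \<sigma>) * r m" unfolding Fn_def
    by (intro tendsto_diff tendsto_mult lims(1) inv0 tendsto_const \<gamma>lim)
  have ev: "eventually (\<lambda>n. dist (\<beta> n) (r m) < \<delta>) sequentially"
    using \<beta>lim \<delta>0 by (rule tendstoD)
  have Fle: "Fn n \<le> M \<sigma> + 2 * K * \<delta> - s" if close: "dist (\<beta> n) (r m) < \<delta>" for n
  proof -
    define j where "j = jj n"
    define k where "k = kk n"
    have jpos: "real j > 0" using jj1[of n] unfolding j_def by simp
    have jk: "(j, k) \<in> loc_dom x0" "(j, k) \<in> I_set x0 \<Lambda> r" using kkd kk(1) unfolding j_def k_def by auto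
    have lp: "lam j k > 0" "Cc j k > 0" using lam_pos[OF jk(1)] Cc_pos[OF jk(1)] by auto
    have D1: "D n \<ge> 1" unfolding D_def by simp
    define M' where "M' = M \<sigma> + 2 * K * \<delta>"
    have ba: "\<bar>\<beta> n - \<alpha>\<bar> \<le> 2 * \<delta>" using close m by (simp add: dist_real_def)
    have GM: "(1 - \<beta> n) * S x + \<beta> n * x \<le> M'" for x
    proof -
      have "(1 - \<beta> n) * S x + \<beta> n * x \<le> M \<sigma> + K * \<bar>\<beta> n - \<alpha>\<bar>" using KB ba \<delta>w by simp
      also have "\<dots> \<le> M'" unfolding M'_def using ba K0 mult_left_mono[OF ba K0] by simp
      finally show ?thesis .
    qed
    have q: "D n / lam j k = 2 powr (real j * \<beta> n)"
    proof -
      have "log 2 (D n / lam j k) = real j * \<beta> n"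
        unfolding \<beta>_def \<gamma>_def j_def k_def using jpos lp D1 unfolding j_def k_def
        by (simp add: log_divide field_simps)
      then show ?thesis using lp D1 by (metis powr_log_cancel divide_pos_pos less_le_trans zero_less_one
            one_less_numeral_iff semiring_norm(76) zero_less_numeral order.irrefl)
    qed
    have T: "2 powr (- real j * S x) * (D n / lam j k) powr (S x - x) = 2 powr (- real j * ((1 - \<beta> n) * S x + \<beta> n * x))" for x
      unfolding q by (simp add: powr_powr powr_add[symmetric] algebra_simps)
    have Tge: "2 powr (- real j * M') \<le> 2 powr (- real j * S x) * (D n / lam j k) powr (S x - x)" for x
      unfolding T using GM[of x] jpos by simp
    have INFge: "2 powr (- real j * M') \<le> (INF x. 2 powr (- real j * S x) * (D n / lam j k) powr (S x - x))"
      by (rule cINF_greatest) (use Tge in auto)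
    have "Cc j k * 2 powr (- real j * M') \<le> \<bar>c j k\<bar>"
      using c_eq[OF jk(2)] INFge lp unfolding D_def j_def k_def by (simp add: mult_left_mono)
    also have "\<dots> \<le> C0 * 2 powr (- real j * s) * D n powr (- (\<sigma> - s))"
      using C0(2)[OF jk(1)] unfolding D_def j_def k_def by simp
    finally have ineq: "Cc j k * 2 powr (- real j * M') \<le> C0 * 2 powr (- real j * s) * D n powr (- (\<sigma> - s))" .
    have "log 2 (Cc j k * 2 powr (- real j * M')) \<le> log 2 (C0 * 2 powr (- real j * s) * D n powr (- (\<sigma> - s)))"
      using ineq lp C0(1) D1 by (subst log_le_cancel_iff) auto
    then have "log 2 (Cc j k) - real j * M' \<le> log 2 C0 - real j * s - (\<sigma> - s) * log 2 (D n)"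
      using lp C0(1) D1 by (simp add: log_mult log_powr algebra_simps)
    then have "(log 2 (Cc j k) - real j * M') / real j \<le> (log 2 C0 - real j * s - (\<sigma> - s) * log 2 (D n)) / real j"
      using jpos by (simp add: divide_right_mono)
    then have "log 2 (Cc j k) / real j - M' \<le> log 2 C0 / real j - s - (\<sigma> - s) * (log 2 (D n) / real j)"
      using jpos by (simp add: diff_divide_distrib)
    moreover have "(s - \<sigma>) * (log 2 (D n) / real j) = - ((\<sigma> - s) * (log 2 (D n) / real j))"
      by (rule neg_neg_eq)
    moreover have "Fn n = log 2 (Cc j k) / real j - log 2 C0 / real j - (s - \<sigma>) * (log 2 (D n) / real j)"
      unfolding Fn_def \<gamma>_def j_def k_def by simp
    ultimately show ?thesis unfolding M'_def by linarith
  qed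
  have "0 - 0 - (s - \<sigma>) * r m \<le> M \<sigma> + 2 * K * \<delta> - s"
    using Flim by (rule tendsto_upperbound) (use ev Fle in \<open>auto elim: eventually_mono\<close>)
  then have A: "s * (1 - r m) + \<sigma> * r m \<le> M \<sigma> + 2 * K * \<delta>" by (simp add: algebra_simps)
  have "\<bar>(s * (1 - r m) + \<sigma> * r m) - (s * (1 - \<alpha>) + \<sigma> * \<alpha>)\<bar> = \<bar>s - \<sigma>\<bar> * \<bar>r m - \<alpha>\<bar>"
    by (simp add: algebra_simps abs_mult[symmetric])
  also have "\<dots> \<le> \<bar>s - \<sigma>\<bar> * \<delta>" using m by (intro mult_left_mono) (auto simp: dist_real_def)
  finally have B: "M \<sigma> + 2 * \<eta> - \<bar>s - \<sigma>\<bar> * \<delta> \<le> s * (1 - r m) + \<sigma> * r m" using M\<sigma> by linarith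
  have "2 * \<eta> \<le> \<delta> * (2 * K + \<bar>s - \<sigma>\<bar>)" using A B by (simp add: algebra_simps)
  also have "\<dots> < \<eta>" using \<delta>\<eta> \<delta>0 by (simp add: algebra_simps)
  finally show False using \<eta>0 by simp
qed


theorem theorem2p1:
  fixes x0 :: real
    and S S' S'' :: "real \<Rightarrow> real"
    and \<Lambda> :: "nat \<Rightarrow> nat set"
    and r :: "nat \<Rightarrow> real"
    and Cc lam c :: "nat \<Rightarrow> int \<Rightarrow> real"
  assumes S_deriv: "\<And>\<sigma>. (S has_real_derivative S' \<sigma>) (at \<sigma>)"
    and S'_deriv: "\<And>\<sigma>. (S' has_real_derivative S'' \<sigma>) (at \<sigma>)"
    and S_decr: "antimono S"
    and S''_neg: "\<And>\<sigma>. S'' \<sigma> < 0"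
    and Lam_inf: "\<And>m. infinite (\<Lambda> m)"
    and Lam_disj: "\<And>m n. m \<noteq> n \<Longrightarrow> \<Lambda> m \<inter> \<Lambda> n = {}"
    and Lam_cover: "(\<Union>m. \<Lambda> m) = UNIV"
    and r_sub: "range r \<subseteq> range (\<lambda>\<sigma>. S' \<sigma> / (S' \<sigma> - 1))"
    and r_dense: "range (\<lambda>\<sigma>. S' \<sigma> / (S' \<sigma> - 1)) \<subseteq> closure (range r)"
    and Cc_pos: "\<And>j k. (j, k) \<in> loc_dom x0 \<Longrightarrow> Cc j k > 0"
    and lam_pos: "\<And>j k. (j, k) \<in> loc_dom x0 \<Longrightarrow> lam j k > 0"
    and cond_i: "\<And>C kk. (\<forall>j. (j, kk j) \<in> loc_dom x0) \<Longrightarrow>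
        limsup (\<lambda>j. ereal (log 2 (Cc j (kk j)) / real j + C * (log 2 (lam j (kk j)) / real j))) \<le> 0"
    and cond_ii: "\<And>jj kk. filterlim jj at_top sequentially \<Longrightarrow>
        (\<forall>n. (jj n, kk n) \<in> I_set x0 \<Lambda> r) \<Longrightarrow>
        ((\<lambda>n. log 2 (Cc (jj n) (kk n)) / real (jj n)) \<longlonglongrightarrow> 0) \<and>
        ((\<lambda>n. log 2 (lam (jj n) (kk n)) / real (jj n)) \<longlonglongrightarrow> 0)"
    and c_bound: "\<And>j k. (j, k) \<in> loc_dom x0 \<Longrightarrow>
        \<bar>c j k\<bar> \<le> Cc j k * (INF \<sigma>. 2 powr (- real j * S \<sigma>) *
            ((1 + \<bar>real_of_int k - 2 ^ j * x0\<bar>) / lam j k) powr (S \<sigma> - \<sigma>))"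
    and c_eq: "\<And>j k. (j, k) \<in> I_set x0 \<Lambda> r \<Longrightarrow>
        \<bar>c j k\<bar> = Cc j k * (INF \<sigma>. 2 powr (- real j * S \<sigma>) *
            ((1 + \<bar>real_of_int k - 2 ^ j * x0\<bar>) / lam j k) powr (S \<sigma> - \<sigma>))"
  shows "\<forall>\<sigma>. two_microlocal_frontier x0 c \<sigma> = ereal (S \<sigma>)"
  proof
  fix \<sigma>
  define A where "A = {s. two_microlocal x0 c s (\<sigma> - s)}"
  have up: "s \<in> A" if "s < S \<sigma>" for s
    unfolding A_def using upper[OF S_deriv Cc_pos lam_pos cond_i c_bound that] by simp
  have lo: "s \<le> S \<sigma>" if "s \<in> A" for s
    using lower[where S=S and S'=S' and S''=S'' and \<Lambda>=\<Lambda> and r=r and Cc=Cc and lam=lam and c=c,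
        OF S_deriv S'_deriv S_decr S''_neg Lam_inf r_sub r_dense Cc_pos lam_pos cond_ii c_eq] that
    unfolding A_def by blast
  have le: "(SUP s\<in>A. ereal s) \<le> ereal (S \<sigma>)"
    by (rule SUP_least) (use lo in simp)
  have ge: "ereal (S \<sigma>) \<le> (SUP s\<in>A. ereal s)"
  proof (rule ccontr)
    assume "\<not> ereal (S \<sigma>) \<le> (SUP s\<in>A. ereal s)"
    then have "(SUP s\<in>A. ereal s) < ereal (S \<sigma>)" by simp
    then obtain z where z: "(SUP s\<in>A. ereal s) < ereal z" "ereal z < ereal (S \<sigma>)"
      using ereal_dense2 by blast
    then have "z \<in> A" using up by simp
    then have "ereal z \<le> (SUP s\<in>A. ereal s)" by (rule SUP_upper)
    then show False using z(1) by simp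
  qed
  show "two_microlocal_frontier x0 c \<sigma> = ereal (S \<sigma>)"
    unfolding two_microlocal_frontier_def A_def[symmetric] using le ge by (rule antisym)
qed

end
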